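(* Let $d\in\mathbb{N}$ and $p$ a kernel as in the context. Let $\nu$ be a probability measure on $(\mathbb{R}^d)^{\mathbb{Z}^d}$ such that $r^{-1/2}A(\nu,r)\to0$ as $r\to\infty$, where $A(\nu,r)=\max_{x\in\mathbb{Z}^d:|x|\le r}E^\nu|\eta(x)|$. Then for all $x\in\mathbb{Z}^d$ and $i,j\in\{1,\dots,d\}$, \[\lim_{t\to\infty}E^\nu\bigl|g_t(\eta,x,i)-g_t(\eta,x-e_j,i)\bigr|=0,\qquad\text{where }g_t(\eta,x,i)=\sum_yp^t(x,y)\eta(y-e_i,y).\]
   Context: The kernel $p:\mathbb{Z}^d\to[0,1)$ satisfies $\sum_x p(x)=1$, $p(x)=0$ for $|x|>M$ for some $M<\infty$, and strong aperiodicity: for every $u\in\mathbb{Z}^d$ the smallest additive subgroup of $\mathbb{Z}^d$ containing $\{u+x:p(x)>0\}$ is $\mathbb{Z}^d$; $p(x,y)=p(y-x)$, $p^t$ the $t$-step transition. Configurations $\eta\in(\mathbb{R}^d)^{\mathbb{Z}^d}$ are written $\eta(x)=(\eta(x-e_i,x))_{i=1}^d$, $|\cdot|$ the Euclidean norm, $e_j$ the unit vectors. *)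

theory Defs
  imports "HOL-Probability.Probability"
begin

text \<open>Lattice points of Z^d are int^'d (d = CARD('d)); a configuration is a map
  eta :: int^'d => real^'d with (eta x)$i = eta(x - e_i, x).\<close>

definition lnorm :: "int^'d \<Rightarrow> real" where
  "lnorm x = sqrt (\<Sum>i\<in>UNIV. (real_of_int (x $ i))^2)"

definition unitv :: "'d::finite \<Rightarrow> int^'d" where
  "unitv i = axis i 1"

definition add_subgroup_hull :: "('a::ab_group_add) set \<Rightarrow> 'a set" where
  "add_subgroup_hull S = \<Inter>{G. S \<subseteq> G \<and> 0 \<in> G \<and> (\<forall>a\<in>G. \<forall>b\<in>G. a - b \<in> G)}"

definition kernel :: "(int^'d \<Rightarrow> real) \<Rightarrow> bool" where
  "kernel p \<longleftrightarrow> (\<forall>x. 0 \<le> p x \<and> p x < 1) \<and> (p has_sum 1) UNIV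
     \<and> (\<exists>M. \<forall>x. lnorm x > M \<longrightarrow> p x = 0)
     \<and> (\<forall>u. add_subgroup_hull {u + x | x. p x > 0} = UNIV)"

fun ptrans :: "(int^'d \<Rightarrow> real) \<Rightarrow> nat \<Rightarrow> int^'d \<Rightarrow> int^'d \<Rightarrow> real" where
  "ptrans p 0 x y = (if x = y then 1 else 0)"
| "ptrans p (Suc t) x y = (\<Sum>\<^sub>\<infinity>z. p (z - x) * ptrans p t z y)"

definition gt :: "(int^'d \<Rightarrow> real) \<Rightarrow> nat \<Rightarrow> (int^'d \<Rightarrow> real^'d) \<Rightarrow> int^'d \<Rightarrow> 'd \<Rightarrow> real" where
  "gt p t \<eta> x i = (\<Sum>\<^sub>\<infinity>y. ptrans p t x y * (\<eta> y $ i))"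

definition Anu :: "(int^'d \<Rightarrow> real^'d) measure \<Rightarrow> real \<Rightarrow> ennreal" where
  "Anu \<nu> r = (SUP x\<in>{x. lnorm x \<le> r}. \<integral>\<^sup>+ \<eta>. ennreal (norm (\<eta> x)) \<partial>\<nu>)"

end

theory Submission
  imports Defs
begin

definition vr :: "int^'d \<Rightarrow> real^'d" where "vr x = (\<chi> i. real_of_int (x $ i))"

lemma lnorm_eq: "lnorm x = norm (vr x)"
  unfolding lnorm_def vr_def norm_vec_def L2_set_def by simp

lemma vr_add: "vr (x + y) = vr x + vr y" and vr_diff: "vr (x - y) = vr x - vr y"
  and vr_neg: "vr (- x) = - vr x"
  by (auto simp: vr_def vec_eq_iff)

lemma lnorm_nonneg: "0 \<le> lnorm x" by (simp add: lnorm_eq)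
lemma lnorm_tri: "lnorm (x + y) \<le> lnorm x + lnorm y"
  by (simp add: lnorm_eq vr_add norm_triangle_ineq)
lemma lnorm_diff: "lnorm (x - y) \<le> lnorm x + lnorm y"
  by (simp add: lnorm_eq vr_diff norm_triangle_ineq4)
lemma lnorm_neg: "lnorm (- x) = lnorm x"
  by (simp add: lnorm_eq vr_neg)
lemma lnorm_comp: "\<bar>real_of_int (x $ i)\<bar> \<le> lnorm x"
proof -
  have "\<bar>vr x $ i\<bar> \<le> norm (vr x)" by (metis component_le_norm_cart real_norm_def)
  thus ?thesis by (simp add: lnorm_eq vr_def)
qed

lemma finite_ball: "finite {x :: int^'d. lnorm x \<le> r}"
proof -
  define K where "K = \<lceil>r\<rceil>"
  have "{x :: int^'d. lnorm x \<le> r} \<subseteq> (\<lambda>f. vec_lambda f) ` (PiE UNIV (\<lambda>_. {-K..K}))"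
  proof
    fix x :: "int^'d" assume "x \<in> {x. lnorm x \<le> r}"
    hence h: "lnorm x \<le> r" by simp
    have "\<forall>i. x $ i \<in> {-K..K}"
    proof
      fix i have "\<bar>real_of_int (x $ i)\<bar> \<le> r" using lnorm_comp[of x i] h by linarith
      hence "\<bar>x $ i\<bar> \<le> K" unfolding K_def by linarith
      thus "x $ i \<in> {-K..K}" by auto
    qed
    hence "(\<lambda>i. x $ i) \<in> PiE UNIV (\<lambda>_. {-K..K})" by auto
    moreover have "x = vec_lambda (\<lambda>i. x $ i)" by simp
    ultimately show "x \<in> (\<lambda>f. vec_lambda f) ` (PiE UNIV (\<lambda>_. {-K..K}))" by blast
  qed
  moreover have "finite (PiE (UNIV::'d set) (\<lambda>_. {-K..K}))" by (intro finite_PiE) auto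
  ultimately show ?thesis by (meson finite_imageI finite_subset)
qed


lemma isum_fin: "finite A \<Longrightarrow> (\<And>x. x \<notin> A \<Longrightarrow> f x = 0) \<Longrightarrow> infsum f UNIV = sum f A"
proof -
  assume a: "finite A" "\<And>x. x \<notin> A \<Longrightarrow> f x = 0"
  have "infsum f UNIV = infsum f A" by (rule infsum_cong_neutral) (use a in auto)
  thus ?thesis using a by simp
qed

lemma fs_summable: "finite A \<Longrightarrow> (\<And>x. x \<notin> A \<Longrightarrow> (f x::real) = 0) \<Longrightarrow> f summable_on UNIV"
proof -
  assume a: "finite A" "\<And>x. x \<notin> A \<Longrightarrow> f x = 0"
  have "f summable_on A" using a by simp
  moreover have "f summable_on UNIV \<longleftrightarrow> f summable_on A"
    by (rule summable_on_cong_neutral) (use a in auto)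
  ultimately show ?thesis by simp
qed

lemma isum_shift: "infsum (\<lambda>w. f (w + h)) UNIV = infsum f (UNIV :: (int^'d) set)"
proof -
  have "bij_betw (\<lambda>w. w + h) (UNIV :: (int^'d) set) UNIV"
    by (rule bij_betwI[where g="\<lambda>w. w - h"]) auto
  thus ?thesis by (rule infsum_reindex_bij_betw)
qed

lemma shift_sum:
  fixes f :: "int^'d \<Rightarrow> real"
  assumes "finite A" "finite B" "(\<lambda>v. v + z) ` B \<subseteq> A" "\<And>v. v \<notin> B \<Longrightarrow> f v = 0"
  shows "(\<Sum>w\<in>A. f (w - z)) = (\<Sum>v\<in>B. f v)"
proof -
  have "(\<Sum>w\<in>A. f (w - z)) = (\<Sum>w\<in>(\<lambda>v. v + z) ` B. f (w - z))"
  proof (rule sum.mono_neutral_right)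
    show "\<forall>i\<in>A - (\<lambda>v. v + z) ` B. f (i - z) = 0"
    proof
      fix i assume "i \<in> A - (\<lambda>v. v + z) ` B"
      hence "i - z \<notin> B" by (metis DiffD2 diff_add_cancel imageI)
      thus "f (i - z) = 0" using assms(4) by blast
    qed
  qed (use assms in auto)
  also have "\<dots> = (\<Sum>v\<in>B. f v)"
    by (subst sum.reindex) (auto simp: inj_on_def)
  finally show ?thesis .
qed

lemma weighted_cs:
  fixes q m r u :: "'a \<Rightarrow> real"
  assumes "\<And>z. z \<in> S \<Longrightarrow> 0 \<le> q z \<and> 0 \<le> m z \<and> 0 \<le> r z \<and> (u z)^2 \<le> m z * r z"
  shows "(\<Sum>z\<in>S. q z * u z)^2 \<le> (\<Sum>z\<in>S. q z * m z) * (\<Sum>z\<in>S. q z * r z)"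
proof -
  have le: "\<bar>q z * u z\<bar> \<le> sqrt (q z * m z) * sqrt (q z * r z)" if "z \<in> S" for z
  proof -
    have "\<bar>u z\<bar> \<le> sqrt (m z * r z)" using assms[OF that] by (intro real_le_rsqrt) simp
    hence "q z * \<bar>u z\<bar> \<le> q z * sqrt (m z * r z)" using assms[OF that] by (simp add: mult_left_mono)
    moreover have "sqrt (q z * m z) * sqrt (q z * r z) = q z * sqrt (m z * r z)"
    proof -
      have "sqrt (q z * m z) * sqrt (q z * r z) = sqrt ((q z)^2 * (m z * r z))"
        by (simp only: real_sqrt_mult[symmetric]) (simp add: power2_eq_square ac_simps)
      also have "\<dots> = q z * sqrt (m z * r z)"
        using assms[OF that] by (simp only: real_sqrt_mult real_sqrt_abs) simp
      finally show ?thesis .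
    qed
    ultimately show ?thesis using assms[OF that] by (simp add: abs_mult)
  qed
  have "\<bar>\<Sum>z\<in>S. q z * u z\<bar> \<le> (\<Sum>z\<in>S. sqrt (q z * m z) * sqrt (q z * r z))"
    by (rule order_trans[OF sum_abs sum_mono]) (use le in auto)
  hence "(\<Sum>z\<in>S. q z * u z)^2 \<le> (\<Sum>z\<in>S. sqrt (q z * m z) * sqrt (q z * r z))^2"
    by (metis abs_le_square_iff abs_of_nonneg abs_ge_zero order.trans)
  also have "\<dots> \<le> (\<Sum>z\<in>S. (sqrt (q z * m z))^2) * (\<Sum>z\<in>S. (sqrt (q z * r z))^2)"
    by (rule Cauchy_Schwarz_ineq_sum)
  also have "\<dots> = (\<Sum>z\<in>S. q z * m z) * (\<Sum>z\<in>S. q z * r z)"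
    using assms by (intro arg_cong2[where f="(*)"] sum.cong) auto
  finally show ?thesis .
qed

lemma quad_step:
  fixes \<mu> \<rho> \<nu> X :: real
  assumes "0 \<le> \<mu>" "0 \<le> \<rho>" "\<nu>^2 \<le> \<mu> * \<rho>"
  shows "0 \<le> \<rho> + 2 * X * \<nu> + X^2 * \<mu>" "(\<nu> + X * \<mu>)^2 \<le> \<mu> * (\<rho> + 2 * X * \<nu> + X^2 * \<mu>)"
proof -
  have e: "\<mu> * (\<rho> + 2 * X * \<nu> + X^2 * \<mu>) - (\<nu> + X * \<mu>)^2 = \<mu> * \<rho> - \<nu>^2"
    by (simp add: power2_eq_square algebra_simps)
  thus "(\<nu> + X * \<mu>)^2 \<le> \<mu> * (\<rho> + 2 * X * \<nu> + X^2 * \<mu>)" using assms by linarith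
  show "0 \<le> \<rho> + 2 * X * \<nu> + X^2 * \<mu>"
  proof (cases "\<mu> = 0")
    case True
    hence "\<nu> = 0" using assms(3) by simp
    thus ?thesis using True assms by simp
  next
    case False
    hence "0 < \<mu>" using assms by simp
    moreover have "0 \<le> \<mu> * (\<rho> + 2 * X * \<nu> + X^2 * \<mu>)"
    proof -
      have "0 \<le> (\<nu> + X * \<mu>)^2" by simp
      thus ?thesis using e assms(3) by linarith
    qed
    ultimately show ?thesis by (simp add: zero_le_mult_iff)
  qed
qed


locale rw =
  fixes p :: "int^'d \<Rightarrow> real" and M :: real
  assumes pnn: "\<And>x. 0 \<le> p x" and pM: "\<And>z. p z \<noteq> 0 \<Longrightarrow> lnorm z \<le> M" and M1: "1 \<le> M"
    and psum: "sum p {z. p z \<noteq> 0} = 1"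
begin

abbreviation "S \<equiv> {z. p z \<noteq> 0}"
abbreviation "Bl r \<equiv> {w::int^'d. lnorm w \<le> r}"

lemma finS: "finite S"
  by (rule finite_subset[OF _ finite_ball[of M]]) (use pM in auto)

fun mu :: "nat \<Rightarrow> int^'d \<Rightarrow> real" where
  "mu 0 w = (if w = 0 then 1 else 0)"
| "mu (Suc n) w = (\<Sum>z\<in>S. p z * mu n (w - z))"

lemma conv_supp:
  assumes "\<And>z v. z \<in> S \<Longrightarrow> F z v \<noteq> 0 \<Longrightarrow> lnorm v \<le> r"
    and "(\<Sum>z\<in>S. p z * F z (w - z)) \<noteq> 0"
  shows "lnorm w \<le> r + M"
proof -
  obtain z where z: "z \<in> S" "p z * F z (w - z) \<noteq> 0"
    using assms(2) by (meson sum.neutral)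
  hence "lnorm (w - z) \<le> r" using assms(1) by auto
  moreover have "lnorm z \<le> M" using z pM by auto
  moreover have "lnorm w \<le> lnorm (w - z) + lnorm z" using lnorm_tri[of "w - z" z] by simp
  ultimately show ?thesis by linarith
qed

lemma conv_sum:
  assumes "\<And>z v. z \<in> S \<Longrightarrow> F z v \<noteq> 0 \<Longrightarrow> lnorm v \<le> r"
  shows "(\<Sum>w\<in>Bl (r + M). \<Sum>z\<in>S. p z * F z (w - z)) = (\<Sum>z\<in>S. p z * (\<Sum>v\<in>Bl r. F z v))"
proof -
  have "(\<Sum>w\<in>Bl (r + M). \<Sum>z\<in>S. p z * F z (w - z)) = (\<Sum>z\<in>S. \<Sum>w\<in>Bl (r + M). p z * F z (w - z))"
    by (rule sum.swap)
  also have "\<dots> = (\<Sum>z\<in>S. p z * (\<Sum>v\<in>Bl r. F z v))"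
  proof (rule sum.cong[OF refl])
    fix z assume z: "z \<in> S"
    have "(\<Sum>w\<in>Bl (r + M). F z (w - z)) = (\<Sum>v\<in>Bl r. F z v)"
    proof (rule shift_sum)
      show "(\<lambda>v. v + z) ` Bl r \<subseteq> Bl (r + M)"
      proof
        fix x assume "x \<in> (\<lambda>v. v + z) ` Bl r"
        then obtain v where v: "x = v + z" "lnorm v \<le> r" by auto
        have "lnorm z \<le> M" using z pM by auto
        thus "x \<in> Bl (r + M)" using v lnorm_tri[of v z] by auto
      qed
    qed (use finite_ball assms z in auto)
    moreover have "(\<Sum>w\<in>Bl (r + M). p z * F z (w - z)) = p z * (\<Sum>w\<in>Bl (r + M). F z (w - z))"
      by (rule sum_distrib_left[symmetric])
    ultimately show "(\<Sum>w\<in>Bl (r + M). p z * F z (w - z)) = p z * (\<Sum>v\<in>Bl r. F z v)"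
      by simp
  qed
  finally show ?thesis .
qed

lemma sum_ball_mono:
  assumes "\<And>v. f v \<noteq> 0 \<Longrightarrow> lnorm v \<le> r" "r \<le> r'"
  shows "(\<Sum>v\<in>Bl r'. f v) = (\<Sum>v\<in>Bl r. (f v :: real))"
proof (rule sum.mono_neutral_right)
  show "finite (Bl r')" by (rule finite_ball)
  show "Bl r \<subseteq> Bl r'" using assms(2) by auto
  show "\<forall>i\<in>Bl r' - Bl r. f i = 0" using assms(1) by force
qed

lemma mu_supp: "mu n w \<noteq> 0 \<Longrightarrow> lnorm w \<le> M * n"
proof (induction n arbitrary: w)
  case 0 thus ?case by (auto split: if_splits simp: lnorm_def)
next
  case (Suc n)
  have "lnorm w \<le> M * n + M"
    by (rule conv_supp[where F="\<lambda>z. mu n"]) (use Suc in auto)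
  thus ?case by (simp add: algebra_simps)
qed

lemma mu_nonneg: "0 \<le> mu n w"
  by (induction n arbitrary: w) (auto intro!: sum_nonneg mult_nonneg_nonneg pnn)

lemma mu_mass: "(\<Sum>w\<in>Bl (M * n). mu n w) = 1"
proof (induction n)
  case 0
  have "0 \<in> Bl 0" by (simp add: lnorm_def)
  thus ?case using sum.delta[OF finite_ball[of 0], of "0::int^'d" "\<lambda>_. 1::real"] by simp
next
  case (Suc n)
  have "(\<Sum>w\<in>Bl (M * Suc n). mu (Suc n) w) = (\<Sum>w\<in>Bl (M * n + M). \<Sum>z\<in>S. p z * mu n (w - z))"
    by (simp add: algebra_simps)
  also have "\<dots> = (\<Sum>z\<in>S. p z * (\<Sum>v\<in>Bl (M * n). mu n v))"
    by (rule conv_sum) (use mu_supp in auto)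
  also have "\<dots> = 1" using Suc psum by simp
  finally show ?case .
qed

end

context rw begin

fun nu :: "(int^'d \<Rightarrow> real) \<Rightarrow> nat \<Rightarrow> int^'d \<Rightarrow> real" where
  "nu X 0 w = 0"
| "nu X (Suc n) w = (\<Sum>z\<in>S. p z * (nu X n (w - z) + X z * mu n (w - z)))"

fun rho :: "(int^'d \<Rightarrow> real) \<Rightarrow> nat \<Rightarrow> int^'d \<Rightarrow> real" where
  "rho X 0 w = 0"
| "rho X (Suc n) w = (\<Sum>z\<in>S. p z * (rho X n (w - z) + 2 * X z * nu X n (w - z) + (X z)^2 * mu n (w - z)))"

lemma nu_supp: "nu X n w \<noteq> 0 \<Longrightarrow> lnorm w \<le> M * n"
proof (induction n arbitrary: w)
  case 0 thus ?case by simp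
next
  case (Suc n)
  have "lnorm w \<le> M * n + M"
    by (rule conv_supp[where F="\<lambda>z v. nu X n v + X z * mu n v"]) (use Suc mu_supp in force)+
  thus ?case by (simp add: algebra_simps)
qed

lemma rho_supp: "rho X n w \<noteq> 0 \<Longrightarrow> lnorm w \<le> M * n"
proof (induction n arbitrary: w)
  case 0 thus ?case by simp
next
  case (Suc n)
  have "lnorm w \<le> M * n + M"
    by (rule conv_supp[where F="\<lambda>z v. rho X n v + 2 * X z * nu X n v + (X z)^2 * mu n v"])
       (use Suc mu_supp nu_supp in force)+
  thus ?case by (simp add: algebra_simps)
qed

lemma cs_ind: "0 \<le> rho X n w \<and> (nu X n w)^2 \<le> mu n w * rho X n w"
proof (induction n arbitrary: w)
  case 0 thus ?case by simp
next
  case (Suc n)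
  have h: "0 \<le> p z \<and> 0 \<le> mu n (w - z) \<and> 0 \<le> rho X n (w - z) + 2 * X z * nu X n (w - z) + (X z)^2 * mu n (w - z)
     \<and> (nu X n (w - z) + X z * mu n (w - z))^2 \<le> mu n (w - z) * (rho X n (w - z) + 2 * X z * nu X n (w - z) + (X z)^2 * mu n (w - z))" for z
    using quad_step[OF mu_nonneg[of n "w - z"], of "rho X n (w - z)" "nu X n (w - z)" "X z"] Suc[of "w - z"] pnn mu_nonneg
    by auto
  have "0 \<le> rho X (Suc n) w" using h by (auto intro!: sum_nonneg)
  moreover have "(nu X (Suc n) w)^2 \<le> mu (Suc n) w * rho X (Suc n) w"
    using weighted_cs[of S p "\<lambda>z. mu n (w - z)" "\<lambda>z. rho X n (w - z) + 2 * X z * nu X n (w - z) + (X z)^2 * mu n (w - z)"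
       "\<lambda>z. nu X n (w - z) + X z * mu n (w - z)"] h by simp
  ultimately show ?case by simp
qed

context
  fixes X :: "int^'d \<Rightarrow> real" and a b :: "int^'d"
  assumes PX: "\<And>f. (\<Sum>z\<in>S. p z * X z * f z) = f a - f b"
begin

lemma rho_mass: "(\<Sum>w\<in>Bl (M * n). rho X n w) = n * (X a - X b)"
proof (induction n)
  case 0 thus ?case by simp
next
  case (Suc n)
  define R where "R = (\<Sum>v\<in>Bl (M * n). rho X n v)"
  define N where "N = (\<Sum>v\<in>Bl (M * n). nu X n v)"
  have "(\<Sum>w\<in>Bl (M * Suc n). rho X (Suc n) w) =
     (\<Sum>w\<in>Bl (M * n + M). \<Sum>z\<in>S. p z * (rho X n (w - z) + 2 * X z * nu X n (w - z) + (X z)^2 * mu n (w - z)))"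
  proof -
    have e: "M * real (Suc n) = M * real n + M" by (simp add: algebra_simps)
    show ?thesis by (simp only: e rho.simps)
  qed
  also have "\<dots> = (\<Sum>z\<in>S. p z * (\<Sum>v\<in>Bl (M * n). rho X n v + 2 * X z * nu X n v + (X z)^2 * mu n v))"
  proof (rule conv_sum)
    fix z v assume "z \<in> S" "rho X n v + 2 * X z * nu X n v + (X z)^2 * mu n v \<noteq> 0"
    hence "rho X n v \<noteq> 0 \<or> nu X n v \<noteq> 0 \<or> mu n v \<noteq> 0" by auto
    thus "lnorm v \<le> M * real n" using mu_supp nu_supp rho_supp by blast
  qed
  also have "\<dots> = (\<Sum>z\<in>S. p z * (R + 2 * X z * N + (X z)^2))"
  proof (rule sum.cong[OF refl])
    fix z
    have "(\<Sum>v\<in>Bl (M * n). rho X n v + 2 * X z * nu X n v + (X z)^2 * mu n v)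
        = R + 2 * X z * N + (X z)^2 * (\<Sum>v\<in>Bl (M * n). mu n v)"
      by (simp add: R_def N_def sum.distrib sum_distrib_left)
    thus "p z * (\<Sum>v\<in>Bl (M * n). rho X n v + 2 * X z * nu X n v + (X z)^2 * mu n v) = p z * (R + 2 * X z * N + (X z)^2)"
      using mu_mass[of n] by simp
  qed
  also have "\<dots> = (\<Sum>z\<in>S. p z * R) + (\<Sum>z\<in>S. p z * X z * (2 * N)) + (\<Sum>z\<in>S. p z * X z * X z)"
    by (simp add: sum.distrib[symmetric] algebra_simps power2_eq_square)
  also have "\<dots> = R + (X a - X b)"
    using PX[of "\<lambda>_. 2 * N"] PX[of X] psum by (simp add: sum_distrib_right[symmetric])
  finally show ?case using Suc by (simp add: R_def algebra_simps)
qed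

lemma nu_formula: "nu X (Suc n) w = real (Suc n) * (mu n (w - a) - mu n (w - b))"
proof (induction n arbitrary: w)
  case 0
  have "nu X (Suc 0) w = (\<Sum>z\<in>S. p z * X z * mu 0 (w - z))" by (simp add: mult.assoc)
  also have "\<dots> = mu 0 (w - a) - mu 0 (w - b)" by (rule PX)
  finally show ?case by simp
next
  case (Suc n)
  have "nu X (Suc (Suc n)) w = (\<Sum>z\<in>S. p z * (nu X (Suc n) (w - z)) + p z * X z * mu (Suc n) (w - z))"
    by (simp add: algebra_simps)
  also have "\<dots> = (\<Sum>z\<in>S. p z * (nu X (Suc n) (w - z))) + (\<Sum>z\<in>S. p z * X z * mu (Suc n) (w - z))"
    by (rule sum.distrib)
  also have "(\<Sum>z\<in>S. p z * X z * mu (Suc n) (w - z)) = mu (Suc n) (w - a) - mu (Suc n) (w - b)"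
    by (rule PX)
  also have "(\<Sum>z\<in>S. p z * (nu X (Suc n) (w - z))) =
      real (Suc n) * ((\<Sum>z\<in>S. p z * mu n (w - a - z)) - (\<Sum>z\<in>S. p z * mu n (w - b - z)))"
  proof -
    have "p z * nu X (Suc n) (w - z) = real (Suc n) * (p z * mu n (w - a - z)) - real (Suc n) * (p z * mu n (w - b - z))" for z
    proof -
      have e1: "w - z - a = w - a - z" "w - z - b = w - b - z" by (simp_all add: algebra_simps)
      show ?thesis unfolding Suc.IH[of "w - z"] e1 by (simp add: algebra_simps del: nu.simps)
    qed
    hence "(\<Sum>z\<in>S. p z * (nu X (Suc n) (w - z))) = (\<Sum>z\<in>S. real (Suc n) * (p z * mu n (w - a - z)) - real (Suc n) * (p z * mu n (w - b - z)))"
      by presburger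
    also have "\<dots> = real (Suc n) * ((\<Sum>z\<in>S. p z * mu n (w - a - z)) - (\<Sum>z\<in>S. p z * mu n (w - b - z)))"
      by (simp only: sum_subtractf sum_distrib_left[symmetric] right_diff_distrib)
    finally show ?thesis .
  qed
  also have "\<dots> = real (Suc n) * (mu (Suc n) (w - a) - mu (Suc n) (w - b))" by simp
  finally show ?case by (simp add: algebra_simps)
qed

lemma nu_l1: "(\<Sum>w\<in>Bl (M * n). \<bar>nu X n w\<bar>) \<le> sqrt (n * (X a - X b))"
proof -
  have le: "\<bar>nu X n w\<bar> \<le> sqrt (mu n w) * sqrt (rho X n w)" for w
    using cs_ind[of X n w] mu_nonneg[of n w]
    by (metis real_le_rsqrt power2_abs real_sqrt_mult)
  have "(\<Sum>w\<in>Bl (M * n). sqrt (mu n w) * sqrt (rho X n w))^2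
      \<le> (\<Sum>w\<in>Bl (M * n). (sqrt (mu n w))^2) * (\<Sum>w\<in>Bl (M * n). (sqrt (rho X n w))^2)"
    by (rule Cauchy_Schwarz_ineq_sum)
  also have "\<dots> = (\<Sum>w\<in>Bl (M * n). mu n w) * (\<Sum>w\<in>Bl (M * n). rho X n w)"
    using mu_nonneg cs_ind by simp
  also have "\<dots> = n * (X a - X b)" using mu_mass rho_mass by simp
  finally have "(\<Sum>w\<in>Bl (M * n). sqrt (mu n w) * sqrt (rho X n w)) \<le> sqrt (n * (X a - X b))"
    by (rule real_le_rsqrt)
  moreover have "(\<Sum>w\<in>Bl (M * n). \<bar>nu X n w\<bar>) \<le> (\<Sum>w\<in>Bl (M * n). sqrt (mu n w) * sqrt (rho X n w))"
    by (rule sum_mono) (rule le)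
  ultimately show ?thesis by linarith
qed

lemma pair_l1: "(\<Sum>w\<in>Bl (M * Suc n). \<bar>mu n (w - a) - mu n (w - b)\<bar>) \<le> sqrt (X a - X b) / sqrt (Suc n)"
proof -
  have "(\<Sum>w\<in>Bl (M * Suc n). \<bar>nu X (Suc n) w\<bar>) = real (Suc n) * (\<Sum>w\<in>Bl (M * Suc n). \<bar>mu n (w - a) - mu n (w - b)\<bar>)"
    by (simp add: nu_formula abs_mult sum_distrib_left del: nu.simps of_nat_Suc)
  hence "real (Suc n) * (\<Sum>w\<in>Bl (M * Suc n). \<bar>mu n (w - a) - mu n (w - b)\<bar>) \<le> sqrt (real (Suc n)) * sqrt (X a - X b)"
    using nu_l1[of "Suc n"] by (simp add: real_sqrt_mult)
  moreover have "real (Suc n) = sqrt (real (Suc n)) * sqrt (real (Suc n))" by simp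
  ultimately have "sqrt (real (Suc n)) * (\<Sum>w\<in>Bl (M * Suc n). \<bar>mu n (w - a) - mu n (w - b)\<bar>) \<le> sqrt (X a - X b)"
    by (metis (no_types, lifting) mult.assoc mult_le_cancel_left_pos of_nat_0_less_iff real_sqrt_gt_0_iff zero_less_Suc)
  thus ?thesis by (simp add: field_simps)
qed

end

definition Xab :: "int^'d \<Rightarrow> int^'d \<Rightarrow> int^'d \<Rightarrow> real" where
  "Xab a b z = (if z = a then 1 / p a else if z = b then - 1 / p b else 0)"

lemma PX_Xab:
  assumes "a \<noteq> b" "0 < p a" "0 < p b"
  shows "(\<Sum>z\<in>S. p z * Xab a b z * f z) = f a - f b"
proof -
  have "p z * Xab a b z * f z = (if z = a then f a else 0) + (if z = b then - f b else 0)" for z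
    using assms by (auto simp: Xab_def)
  hence "(\<Sum>z\<in>S. p z * Xab a b z * f z) = (\<Sum>z\<in>S. (if z = a then f a else 0)) + (\<Sum>z\<in>S. (if z = b then - f b else 0))"
    by (simp add: sum.distrib)
  also have "\<dots> = f a - f b" using assms finS by (simp add: sum.delta)
  finally show ?thesis .
qed

end

context rw begin

definition D :: "int^'d \<Rightarrow> nat \<Rightarrow> real" where
  "D h n = infsum (\<lambda>w. \<bar>mu n w - mu n (w - h)\<bar>) UNIV"

lemma mu_far: "M * n + lnorm h < lnorm w \<Longrightarrow> mu n (w - h) = 0"
proof (rule ccontr)
  assume a: "M * n + lnorm h < lnorm w" "mu n (w - h) \<noteq> 0"
  have "lnorm (w - h) \<le> M * n" by (rule mu_supp[OF a(2)])
  moreover have "lnorm w \<le> lnorm (w - h) + lnorm h" using lnorm_tri[of "w - h" h] by simp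
  ultimately show False using a by linarith
qed

lemma mu_far0: "M * n < lnorm w \<Longrightarrow> mu n w = 0"
  using mu_far[of n 0 w] by (simp add: lnorm_def)

lemma shift_fin: "infsum (\<lambda>w. \<bar>mu n (w - h1) - mu n (w - h2)\<bar>) UNIV
    = (\<Sum>w\<in>Bl (M * n + lnorm h1 + lnorm h2). \<bar>mu n (w - h1) - mu n (w - h2)\<bar>)"
proof (rule isum_fin[OF finite_ball])
  fix w assume "w \<notin> Bl (M * n + lnorm h1 + lnorm h2)"
  hence "M * n + lnorm h1 < lnorm w" "M * n + lnorm h2 < lnorm w" using lnorm_nonneg[of h1] lnorm_nonneg[of h2] by auto
  thus "\<bar>mu n (w - h1) - mu n (w - h2)\<bar> = 0" using mu_far by simp
qed

lemma shift_summable: "(\<lambda>w. \<bar>mu n (w - h1) - mu n (w - h2)\<bar>) summable_on UNIV"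
proof (rule fs_summable[OF finite_ball])
  fix w assume "w \<notin> Bl (M * n + lnorm h1 + lnorm h2)"
  hence "M * n + lnorm h1 < lnorm w" "M * n + lnorm h2 < lnorm w" using lnorm_nonneg[of h1] lnorm_nonneg[of h2] by auto
  thus "\<bar>mu n (w - h1) - mu n (w - h2)\<bar> = 0" using mu_far by simp
qed

lemma D_alt: "D h n = infsum (\<lambda>w. \<bar>mu n (w - 0) - mu n (w - h)\<bar>) UNIV"
  by (simp add: D_def)

lemma D_nonneg: "0 \<le> D h n"
  unfolding D_def by (rule infsum_nonneg) auto

lemma D_zero: "D 0 n = 0"
  by (simp add: D_def)

lemma D_neg: "D (- h) n = D h n"
proof -
  have "D (- h) n = infsum (\<lambda>w. (\<lambda>v. \<bar>mu n (v - h) - mu n v\<bar>) (w + h)) UNIV"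
    by (simp add: D_def abs_minus_commute)
  also have "\<dots> = infsum (\<lambda>v. \<bar>mu n (v - h) - mu n v\<bar>) UNIV" by (rule isum_shift)
  also have "\<dots> = D h n" by (simp add: D_def abs_minus_commute)
  finally show ?thesis .
qed

lemma D_sub: "D (h1 - h2) n \<le> D h1 n + D h2 n"
proof -
  have s1: "(\<lambda>w. \<bar>mu n w - mu n (w - (h1 - h2))\<bar>) summable_on UNIV"
    using shift_summable[of n 0 "h1 - h2"] by simp
  have s2: "(\<lambda>w. \<bar>mu n w - mu n (w - h1)\<bar>) summable_on UNIV"
    using shift_summable[of n 0 h1] by simp
  have s3: "(\<lambda>w. \<bar>mu n (w - h1) - mu n (w - (h1 - h2))\<bar>) summable_on UNIV"
    using shift_summable[of n h1 "h1 - h2"] by simp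
  have "D (h1 - h2) n \<le> infsum (\<lambda>w. \<bar>mu n w - mu n (w - h1)\<bar> + \<bar>mu n (w - h1) - mu n (w - (h1 - h2))\<bar>) UNIV"
    unfolding D_def by (rule infsum_mono[OF s1 summable_on_add[OF s2 s3]]) linarith
  also have "\<dots> = D h1 n + infsum (\<lambda>w. \<bar>mu n (w - h1) - mu n (w - (h1 - h2))\<bar>) UNIV"
    unfolding D_def by (rule infsum_add[OF s2 s3])
  also have "infsum (\<lambda>w. \<bar>mu n (w - h1) - mu n (w - (h1 - h2))\<bar>) UNIV
      = infsum (\<lambda>w. (\<lambda>v. \<bar>mu n v - mu n (v - (- h2))\<bar>) (w + (- h1))) UNIV"
    by (simp add: algebra_simps)
  also have "\<dots> = D (- h2) n" unfolding D_def by (rule isum_shift)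
  also have "\<dots> = D h2 n" by (rule D_neg)
  finally show ?thesis by simp
qed

lemma D_pair:
  assumes "a \<noteq> b" "0 < p a" "0 < p b"
  shows "D (b - a) n \<le> sqrt (Xab a b a - Xab a b b) / sqrt (Suc n)"
proof -
  have la: "lnorm a \<le> M" "lnorm b \<le> M" using assms pM by auto
  have "(\<Sum>w\<in>Bl (M * Suc n). \<bar>mu n (w - a) - mu n (w - b)\<bar>) = infsum (\<lambda>w. \<bar>mu n (w - a) - mu n (w - b)\<bar>) UNIV"
  proof (rule isum_fin[OF finite_ball, symmetric])
    fix w assume "w \<notin> Bl (M * Suc n)"
    hence "M * n + lnorm a < lnorm w" "M * n + lnorm b < lnorm w" using la by (auto simp: algebra_simps)
    thus "\<bar>mu n (w - a) - mu n (w - b)\<bar> = 0" using mu_far by simp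
  qed
  also have "\<dots> = infsum (\<lambda>w. (\<lambda>v. \<bar>mu n (v - a) - mu n (v - b)\<bar>) (w + a)) UNIV"
    by (rule isum_shift[symmetric])
  also have "\<dots> = D (b - a) n" unfolding D_def by (simp add: algebra_simps)
  finally show ?thesis using pair_l1[OF PX_Xab[OF assms], of n] by simp
qed

lemma D_bound:
  assumes hull: "\<forall>u. add_subgroup_hull {u + x | x. p x > 0} = UNIV"
  shows "\<exists>C. \<forall>n. D h n \<le> C / sqrt (Suc n)"
proof -
  obtain a0 where a0: "p a0 \<noteq> 0" using psum by (metis (mono_tags, lifting) mem_Collect_eq sum.neutral zero_neq_one)
  hence pa0: "0 < p a0" using pnn[of a0] by linarith
  define G where "G = {h. \<exists>C. \<forall>n. D h n \<le> C / sqrt (Suc n)}"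
  have "{- a0 + x | x. p x > 0} \<subseteq> G"
  proof
    fix y assume "y \<in> {- a0 + x | x. p x > 0}"
    then obtain x where x: "y = x - a0" "p x > 0" by auto
    show "y \<in> G"
    proof (cases "x = a0")
      case True thus ?thesis using x D_zero unfolding G_def by (intro CollectI exI[of _ 0]) auto
    next
      case False
      thus ?thesis using D_pair[OF _ pa0 x(2), of n for n] x(1) unfolding G_def by auto
    qed
  qed
  moreover have "0 \<in> G" unfolding G_def using D_zero by (intro CollectI exI[of _ 0]) auto
  moreover have "\<forall>a\<in>G. \<forall>b\<in>G. a - b \<in> G"
  proof (intro ballI)
    fix a b assume "a \<in> G" "b \<in> G"
    then obtain C1 C2 where C: "\<And>n. D a n \<le> C1 / sqrt (Suc n)" "\<And>n. D b n \<le> C2 / sqrt (Suc n)"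
      unfolding G_def by auto
    have "D (a - b) n \<le> (C1 + C2) / sqrt (Suc n)" for n
      using D_sub[of a b n] C[of n] by (simp add: add_divide_distrib)
    thus "a - b \<in> G" unfolding G_def by auto
  qed
  ultimately have "add_subgroup_hull {- a0 + x | x. p x > 0} \<subseteq> G"
    unfolding add_subgroup_hull_def by (intro Inter_lower) auto
  moreover have "{- a0 + x | x. p x > 0} = {x - a0 | x. p x > 0}" by auto
  ultimately have "h \<in> G" using hull[rule_format, of "- a0"] by auto
  thus ?thesis unfolding G_def by auto
qed

end

context rw begin

lemma ptrans_mu: "ptrans p t x y = mu t (y - x)"
proof (induction t arbitrary: x y)
  case 0 thus ?case by simp
next
  case (Suc t)
  have "ptrans p (Suc t) x y = infsum (\<lambda>z. p (z - x) * mu t (y - z)) UNIV"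
    by (simp add: Suc)
  also have "\<dots> = infsum (\<lambda>v. (\<lambda>z. p (z - x) * mu t (y - z)) (v + x)) UNIV"
    by (rule isum_shift[symmetric])
  also have "\<dots> = infsum (\<lambda>v. p v * mu t (y - x - v)) UNIV"
    by (simp add: algebra_simps)
  also have "\<dots> = (\<Sum>v\<in>S. p v * mu t (y - x - v))"
    by (rule isum_fin[OF finS]) simp
  finally show ?case by simp
qed

lemma gt_fin:
  assumes "M * t + lnorm x \<le> R"
  shows "gt p t \<eta> x i = (\<Sum>y\<in>Bl R. mu t (y - x) * (\<eta> y $ i))"
  unfolding gt_def ptrans_mu
proof (rule isum_fin[OF finite_ball])
  fix y assume "y \<notin> Bl R"
  hence "M * t + lnorm x < lnorm y" using assms by auto
  thus "mu t (y - x) * \<eta> y $ i = 0" using mu_far by simp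
qed

end


theorem lemma4p2:
  fixes p :: "int^'d \<Rightarrow> real"
    and \<nu> :: "(int^'d \<Rightarrow> real^'d) measure"
  assumes "kernel p"
    and "prob_space \<nu>"
    and "sets \<nu> = sets (Pi\<^sub>M UNIV (\<lambda>_. (borel :: (real^'d) measure)))"
    and "((\<lambda>r. Anu \<nu> r / ennreal (sqrt r)) \<longlongrightarrow> 0) at_top"
  shows "\<forall>x i j. ((\<lambda>t. \<integral>\<^sup>+ \<eta>. ennreal \<bar>gt p t \<eta> x i - gt p t \<eta> (x - unitv j) i\<bar> \<partial>\<nu>)
            \<longlongrightarrow> 0) at_top"
proof (intro allI)
  fix x :: "int^'d" and i j :: 'd
  have k: "\<forall>x. 0 \<le> p x \<and> p x < 1" "(p has_sum 1) UNIV" "\<exists>M. \<forall>x. lnorm x > M \<longrightarrow> p x = 0"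
    "\<forall>u. add_subgroup_hull {u + x | x. p x > 0} = UNIV"
    using assms(1) unfolding kernel_def by auto
  obtain M0 where M0: "\<forall>x. lnorm x > M0 \<longrightarrow> p x = 0" using k(3) by auto
  define M where "M = \<bar>M0\<bar> + 1"
  have pM: "p z \<noteq> 0 \<Longrightarrow> lnorm z \<le> M" for z using M0 unfolding M_def by force
  have finS: "finite {z. p z \<noteq> 0}"
    by (rule finite_subset[OF _ finite_ball[of M]]) (use pM in auto)
  have "infsum p UNIV = 1" using k(2) by (rule infsumI)
  moreover have "infsum p UNIV = sum p {z. p z \<noteq> 0}" by (rule isum_fin[OF finS]) auto
  ultimately have psum: "sum p {z. p z \<noteq> 0} = 1" by simp
  interpret rw p M
    by unfold_locales (use k(1) pM psum in \<open>auto simp: M_def\<close>)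
  define h where "h = unitv j"
  obtain C where C: "\<And>n. D h n \<le> C / sqrt (Suc n)" using D_bound[OF k(4)] by auto
  define C' where "C' = max C 0"
  have C': "\<And>n. D h n \<le> C' / sqrt (Suc n)" "0 \<le> C'"
  proof -
    show "0 \<le> C'" by (simp add: C'_def)
    fix n
    have "C / sqrt (Suc n) \<le> C' / sqrt (Suc n)" by (rule divide_right_mono) (auto simp: C'_def)
    thus "D h n \<le> C' / sqrt (Suc n)" using C[of n] by linarith
  qed
  define K where "K = lnorm x + lnorm h"
  have K0: "0 \<le> K" unfolding K_def using lnorm_nonneg[of x] lnorm_nonneg[of h] by simp
  define R where "R t = K + M * real t" for t :: nat
  have meas_c: "(\<lambda>\<eta>. \<eta> y) \<in> measurable \<nu> (borel :: (real^'d) measure)" for y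
    unfolding measurable_cong_sets[OF assms(3) refl] by (rule measurable_component_singleton) simp
  have meas: "(\<lambda>\<eta>. ennreal (c * norm (\<eta> y))) \<in> borel_measurable \<nu>" for c y
    using meas_c[of y] by measurable
  have meas2: "(\<lambda>\<eta>. ennreal (norm (\<eta> y))) \<in> borel_measurable \<nu>" for y
    using meas_c[of y] by measurable
  have bound: "(\<integral>\<^sup>+ \<eta>. ennreal \<bar>gt p t \<eta> x i - gt p t \<eta> (x - h) i\<bar> \<partial>\<nu>) \<le> ennreal (D h t) * Anu \<nu> (R t)" for t
  proof -
    define Y where "Y = Bl (R t)"
    define f where "f y = mu t (y - x) - mu t (y - (x - h))" for y
    have lx: "lnorm (x - h) \<le> lnorm x + lnorm h" by (rule lnorm_diff)
    have g1: "gt p t \<eta> x i = (\<Sum>y\<in>Y. mu t (y - x) * (\<eta> y $ i))" for \<eta>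
      unfolding Y_def by (rule gt_fin) (use lnorm_nonneg[of h] in \<open>simp add: R_def K_def\<close>)
    have g2: "gt p t \<eta> (x - h) i = (\<Sum>y\<in>Y. mu t (y - (x - h)) * (\<eta> y $ i))" for \<eta>
      unfolding Y_def by (rule gt_fin) (use lx in \<open>simp add: R_def K_def\<close>)
    have pt: "ennreal \<bar>gt p t \<eta> x i - gt p t \<eta> (x - h) i\<bar> \<le> (\<Sum>y\<in>Y. ennreal (\<bar>f y\<bar> * norm (\<eta> y)))" for \<eta>
    proof -
      have "\<bar>gt p t \<eta> x i - gt p t \<eta> (x - h) i\<bar> = \<bar>\<Sum>y\<in>Y. f y * (\<eta> y $ i)\<bar>"
        unfolding g1 g2 f_def by (simp add: sum_subtractf left_diff_distrib)
      also have "\<dots> \<le> (\<Sum>y\<in>Y. \<bar>f y * (\<eta> y $ i)\<bar>)" by (rule sum_abs)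
      also have "\<dots> \<le> (\<Sum>y\<in>Y. \<bar>f y\<bar> * norm (\<eta> y))"
      proof (rule sum_mono)
        fix y
        have "\<bar>\<eta> y $ i\<bar> \<le> norm (\<eta> y)" by (metis component_le_norm_cart real_norm_def)
        thus "\<bar>f y * (\<eta> y $ i)\<bar> \<le> \<bar>f y\<bar> * norm (\<eta> y)" by (simp add: abs_mult mult_left_mono)
      qed
      finally show ?thesis by (simp add: ennreal_leI)
    qed
    have "(\<integral>\<^sup>+ \<eta>. ennreal \<bar>gt p t \<eta> x i - gt p t \<eta> (x - h) i\<bar> \<partial>\<nu>) \<le> (\<integral>\<^sup>+ \<eta>. (\<Sum>y\<in>Y. ennreal (\<bar>f y\<bar> * norm (\<eta> y))) \<partial>\<nu>)"
      by (rule nn_integral_mono) (rule pt)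
    also have "\<dots> = (\<Sum>y\<in>Y. \<integral>\<^sup>+ \<eta>. ennreal (\<bar>f y\<bar> * norm (\<eta> y)) \<partial>\<nu>)"
      by (rule nn_integral_sum) (rule meas)
    also have "\<dots> = (\<Sum>y\<in>Y. ennreal \<bar>f y\<bar> * (\<integral>\<^sup>+ \<eta>. ennreal (norm (\<eta> y)) \<partial>\<nu>))"
      by (intro sum.cong refl) (simp add: ennreal_mult nn_integral_cmult[OF meas2])
    also have "\<dots> \<le> (\<Sum>y\<in>Y. ennreal \<bar>f y\<bar> * Anu \<nu> (R t))"
    proof (rule sum_mono)
      fix y assume "y \<in> Y"
      hence "(\<integral>\<^sup>+ \<eta>. ennreal (norm (\<eta> y)) \<partial>\<nu>) \<le> Anu \<nu> (R t)"
        unfolding Anu_def Y_def by (intro SUP_upper) auto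
      thus "ennreal \<bar>f y\<bar> * (\<integral>\<^sup>+ \<eta>. ennreal (norm (\<eta> y)) \<partial>\<nu>) \<le> ennreal \<bar>f y\<bar> * Anu \<nu> (R t)"
        by (rule mult_left_mono) simp
    qed
    also have "\<dots> = ennreal (\<Sum>y\<in>Y. \<bar>f y\<bar>) * Anu \<nu> (R t)"
    proof -
      have "(\<Sum>y\<in>Y. ennreal \<bar>f y\<bar>) = ennreal (\<Sum>y\<in>Y. \<bar>f y\<bar>)" by (rule sum_ennreal) simp
      moreover have "(\<Sum>y\<in>Y. ennreal \<bar>f y\<bar> * Anu \<nu> (R t)) = (\<Sum>y\<in>Y. ennreal \<bar>f y\<bar>) * Anu \<nu> (R t)"
        by (rule sum_distrib_right[symmetric])
      ultimately show ?thesis by simp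
    qed
    also have "(\<Sum>y\<in>Y. \<bar>f y\<bar>) = D h t"
    proof -
      have "(\<Sum>y\<in>Y. \<bar>f y\<bar>) = infsum (\<lambda>y. \<bar>f y\<bar>) UNIV"
      proof (rule isum_fin[symmetric])
        show "finite Y" unfolding Y_def by (rule finite_ball)
        fix y assume "y \<notin> Y"
        hence "M * t + lnorm x < lnorm y" "M * t + lnorm (x - h) < lnorm y"
          using lx lnorm_nonneg[of h] by (auto simp: Y_def R_def K_def)
        thus "\<bar>f y\<bar> = 0" unfolding f_def using mu_far by simp
      qed
      also have "\<dots> = infsum (\<lambda>v. (\<lambda>y. \<bar>f y\<bar>) (v + (x - h))) UNIV"
        by (rule isum_shift[symmetric])
      also have "\<dots> = D h t" unfolding D_def f_def
        by (simp add: algebra_simps abs_minus_commute)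
      finally show ?thesis .
    qed
    finally show ?thesis .
  qed
  have "\<forall>t. real t \<le> R t"
  proof
    fix t
    have "1 * real t \<le> M * real t" by (rule mult_right_mono[OF M1]) simp
    thus "real t \<le> R t" using K0 by (simp add: R_def)
  qed
  hence Rlim: "filterlim R at_top sequentially"
    by (intro filterlim_at_top_mono[OF filterlim_real_sequentially] always_eventually)
  have lim1: "((\<lambda>t. Anu \<nu> (R t) / ennreal (sqrt (R t))) \<longlongrightarrow> 0) sequentially"
    using filterlim_compose[OF assms(4) Rlim] by (simp add: o_def)
  define B where "B = C' * sqrt (K + M)"
  have lim2: "((\<lambda>t. ennreal B * (Anu \<nu> (R t) / ennreal (sqrt (R t)))) \<longlongrightarrow> 0) sequentially"
    using ennreal_tendsto_cmult[OF _ lim1, of "ennreal B"] by simp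
  have ev: "eventually (\<lambda>t. (\<integral>\<^sup>+ \<eta>. ennreal \<bar>gt p t \<eta> x i - gt p t \<eta> (x - h) i\<bar> \<partial>\<nu>)
      \<le> ennreal B * (Anu \<nu> (R t) / ennreal (sqrt (R t)))) sequentially"
  proof (rule eventually_sequentiallyI[of 1])
    fix t :: nat assume t1: "1 \<le> t"
    have Rpos: "0 < R t" using t1 K0 M1 by (simp add: R_def add_nonneg_pos)
    have le: "C' / sqrt (Suc t) \<le> B * inverse (sqrt (R t))"
    proof -
      have "R t / real (Suc t) \<le> K + M"
      proof -
        have "R t \<le> (K + M) * real (Suc t)" using K0 M1 by (simp add: R_def algebra_simps)
        thus ?thesis by (simp add: divide_le_eq)
      qed
      hence "sqrt (R t) / sqrt (Suc t) \<le> sqrt (K + M)" by (metis real_sqrt_divide real_sqrt_le_mono)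
      hence "C' * (sqrt (R t) / sqrt (Suc t)) \<le> C' * sqrt (K + M)" using C'(2) by (rule mult_left_mono)
      hence "C' / sqrt (Suc t) * sqrt (R t) \<le> B" unfolding B_def by simp
      thus ?thesis using Rpos by (simp add: field_simps)
    qed
    have "(\<integral>\<^sup>+ \<eta>. ennreal \<bar>gt p t \<eta> x i - gt p t \<eta> (x - h) i\<bar> \<partial>\<nu>) \<le> ennreal (D h t) * Anu \<nu> (R t)"
      by (rule bound)
    also have "\<dots> \<le> ennreal (B * inverse (sqrt (R t))) * Anu \<nu> (R t)"
      by (rule mult_right_mono) (use C'(1)[of t] le in \<open>auto intro: ennreal_leI order_trans\<close>)
    also have "\<dots> = ennreal B * (Anu \<nu> (R t) / ennreal (sqrt (R t)))"
    proof -
      have B0: "0 \<le> B" unfolding B_def using C'(2) K0 M1 by simp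
      have "ennreal (B * inverse (sqrt (R t))) = ennreal B * ennreal (inverse (sqrt (R t)))"
        by (rule ennreal_mult) (use B0 Rpos in auto)
      moreover have "inverse (ennreal (sqrt (R t))) = ennreal (inverse (sqrt (R t)))"
        by (rule inverse_ennreal) (use Rpos in simp)
      ultimately show ?thesis by (simp add: divide_ennreal_def mult_ac)
    qed
    finally show "(\<integral>\<^sup>+ \<eta>. ennreal \<bar>gt p t \<eta> x i - gt p t \<eta> (x - h) i\<bar> \<partial>\<nu>)
      \<le> ennreal B * (Anu \<nu> (R t) / ennreal (sqrt (R t)))" .
  qed
  show "((\<lambda>t. \<integral>\<^sup>+ \<eta>. ennreal \<bar>gt p t \<eta> x i - gt p t \<eta> (x - unitv j) i\<bar> \<partial>\<nu>) \<longlongrightarrow> 0) at_top"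
    unfolding h_def[symmetric]
    by (rule tendsto_sandwich[OF always_eventually ev tendsto_const lim2]) simp
qed

end
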